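(* Let $T,S\in\mathcal{B}_A(\mathcal{H})$. Then $$\omega_A(T+S)\le\sqrt{\omega_A^2(T)+\omega_A^2(S)+\tfrac12\big\|T^{\sharp_A}T+SS^{\sharp_A}\big\|_A+\omega_A(ST)}.$$
   Context: $\mathcal{H}$ is a complex Hilbert space with inner product $\langle\cdot,\cdot\rangle$, and $A$ is a fixed nonzero positive bounded operator on $\mathcal{H}$. Set $\langle x,y\rangle_A=\langle Ax,y\rangle$ and $\|x\|_A=\|A^{1/2}x\|$. $\mathcal{B}_A(\mathcal{H})$ is the set of bounded operators $T$ for which there exists a bounded $S$ with $\langle Tx,y\rangle_A=\langle x,Sy\rangle_A$ for all $x,y$ (equivalently $\mathcal{R}(T^*A)\subseteq\mathcal{R}(A)$). For $T\in\mathcal{B}_A(\mathcal{H})$, $T^{\sharp_A}=A^\dagger T^*A$ ($A^\dagger$ the Moore–Penrose inverse) is the reduced solution of $AX=T^*A$. For an operator $T$ with $\|Tx\|_A\le\lambda\|x\|_A$ for some $\lambda>0$ and all $x$, $\|T\|_A=\sup\{\|Tx\|_A: \|x\|_A=1\}$, and $\omega_A(T)=\sup\{|\langle Tx,x\rangle_A|:\|x\|_A=1\}$. *)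

theory Defs
  imports "HOL-Analysis.Analysis"
begin

class complex_vector = real_vector +
  fixes scaleC :: "complex \<Rightarrow> 'a \<Rightarrow> 'a" (infixr "*\<^sub>C" 75)
  assumes scaleC_add_right: "a *\<^sub>C (x + y) = a *\<^sub>C x + a *\<^sub>C y"
    and scaleC_add_left: "(a + b) *\<^sub>C x = a *\<^sub>C x + b *\<^sub>C x"
    and scaleC_scaleC: "a *\<^sub>C (b *\<^sub>C x) = (a * b) *\<^sub>C x"
    and scaleC_one: "1 *\<^sub>C x = x"
    and scaleR_scaleC: "scaleR r x = complex_of_real r *\<^sub>C x"

class complex_inner = complex_vector + real_normed_vector +
  fixes cinner :: "'a \<Rightarrow> 'a \<Rightarrow> complex"
  assumes cinner_commute: "cinner x y = cnj (cinner y x)"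
    and cinner_add_left: "cinner (x + y) z = cinner x z + cinner y z"
    and cinner_scaleC_left: "cinner (a *\<^sub>C x) y = a * cinner x y"
    and cinner_self_nonneg: "Im (cinner x x) = 0 \<and> 0 \<le> Re (cinner x x)"
    and cinner_self_eq_zero: "cinner x x = 0 \<longleftrightarrow> x = 0"
    and norm_eq_sqrt_cinner: "norm x = sqrt (Re (cinner x x))"

class chilbert_space = complex_inner + complete_space

definition bounded_clinear :: "('a::complex_inner \<Rightarrow> 'a) \<Rightarrow> bool" where
  "bounded_clinear T \<longleftrightarrow>
     (\<forall>x y. T (x + y) = T x + T y) \<and> (\<forall>c x. T (c *\<^sub>C x) = c *\<^sub>C T x) \<and>
     (\<exists>K. \<forall>x. norm (T x) \<le> norm x * K)"

definition adj :: "('a::complex_inner \<Rightarrow> 'a) \<Rightarrow> ('a \<Rightarrow> 'a)" where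
  "adj T = (THE S. bounded_clinear S \<and> (\<forall>x y. cinner (T x) y = cinner x (S y)))"

definition positive_op :: "('a::complex_inner \<Rightarrow> 'a) \<Rightarrow> bool" where
  "positive_op A \<longleftrightarrow> bounded_clinear A \<and>
     (\<forall>x. Im (cinner (A x) x) = 0 \<and> 0 \<le> Re (cinner (A x) x))"

text \<open>Moore--Penrose inverse of \<open>A\<close>, evaluated on the range of \<open>A\<close>:
  \<open>A\<^sup>\<dagger> y\<close> is the unique \<open>z \<in> N(A)\<^sup>\<bottom>\<close> with \<open>A z = y\<close>.  (This is the full
  definition of \<open>A\<^sup>\<dagger>\<close> on \<open>R(A)\<close>, the only place it is used below.)\<close>
definition mp_inv :: "('a::complex_inner \<Rightarrow> 'a) \<Rightarrow> 'a \<Rightarrow> 'a" where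
  "mp_inv A y = (THE z. (\<forall>w. A w = 0 \<longrightarrow> cinner z w = 0) \<and> A z = y)"

definition A_inner :: "('a::complex_inner \<Rightarrow> 'a) \<Rightarrow> 'a \<Rightarrow> 'a \<Rightarrow> complex" where
  "A_inner A x y = cinner (A x) y"

text \<open>\<open>\<parallel>x\<parallel>\<^sub>A = \<parallel>A\<^sup>1\<^sup>/\<^sup>2 x\<parallel> = sqrt \<langle>Ax,x\<rangle>\<close>.\<close>
definition A_seminorm :: "('a::complex_inner \<Rightarrow> 'a) \<Rightarrow> 'a \<Rightarrow> real" where
  "A_seminorm A x = sqrt (Re (A_inner A x x))"

definition B_A :: "('a::complex_inner \<Rightarrow> 'a) \<Rightarrow> ('a \<Rightarrow> 'a) set" where
  "B_A A = {T. bounded_clinear T \<and>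
     (\<exists>S. bounded_clinear S \<and> (\<forall>x y. A_inner A (T x) y = A_inner A x (S y)))}"

definition A_sharp :: "('a::complex_inner \<Rightarrow> 'a) \<Rightarrow> ('a \<Rightarrow> 'a) \<Rightarrow> 'a \<Rightarrow> 'a" where
  "A_sharp A T = (\<lambda>x. mp_inv A (adj T (A x)))"

definition A_opnorm :: "('a::complex_inner \<Rightarrow> 'a) \<Rightarrow> ('a \<Rightarrow> 'a) \<Rightarrow> real" where
  "A_opnorm A T = Sup {A_seminorm A (T x) | x. A_seminorm A x = 1}"

definition A_numrad :: "('a::complex_inner \<Rightarrow> 'a) \<Rightarrow> ('a \<Rightarrow> 'a) \<Rightarrow> real" where
  "A_numrad A T = Sup {cmod (A_inner A (T x) x) | x. A_seminorm A x = 1}"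

end

theory Submission
  imports Defs
begin

lemma scaleC_zero_left[simp]: "(0::complex) *\<^sub>C (x::'a::complex_vector) = 0"
  using scaleR_scaleC[of 0 x] by simp

lemma scaleC_minus_one[simp]: "(-1::complex) *\<^sub>C (x::'a::complex_vector) = - x"
  using scaleR_scaleC[of "-1" x] by simp

lemma scaleC_ofreal: "complex_of_real r *\<^sub>C (x::'a::complex_vector) = r *\<^sub>R x"
  using scaleR_scaleC[of r x] by simp

lemma scaleC_zero_right[simp]: "c *\<^sub>C (0::'a::complex_vector) = 0"
  using scaleC_scaleC[of c 0 0] by simp

lemma scaleC_minus_right: "c *\<^sub>C (- (x::'a::complex_vector)) = - (c *\<^sub>C x)"
proof -
  have "c *\<^sub>C (- x) = c *\<^sub>C ((-1) *\<^sub>C x)" by simp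
  also have "\<dots> = (c * (-1)) *\<^sub>C x" by (simp only: scaleC_scaleC)
  also have "\<dots> = ((-1) * c) *\<^sub>C x" by (simp only: mult.commute)
  also have "\<dots> = (-1) *\<^sub>C (c *\<^sub>C x)" by (simp only: scaleC_scaleC)
  also have "\<dots> = - (c *\<^sub>C x)" by (rule scaleC_minus_one)
  finally show ?thesis .
qed

lemma scaleC_diff_right: "c *\<^sub>C ((x::'a::complex_vector) - y) = c *\<^sub>C x - c *\<^sub>C y"
  by (simp only: diff_conv_add_uminus scaleC_add_right scaleC_minus_right)

lemma scaleC_minus_left: "(- c) *\<^sub>C (x::'a::complex_vector) = - (c *\<^sub>C x)"
proof -
  have "(- c) *\<^sub>C x = ((-1) * c) *\<^sub>C x" by simp
  also have "\<dots> = - (c *\<^sub>C x)" by (simp only: scaleC_scaleC[symmetric]) simp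
  finally show ?thesis .
qed

lemma scaleC_diff_left: "(a - b) *\<^sub>C (x::'a::complex_vector) = a *\<^sub>C x - b *\<^sub>C x"
  by (simp only: diff_conv_add_uminus scaleC_add_left scaleC_minus_left)

locale sesq =
  fixes f :: "'a::complex_vector \<Rightarrow> 'a \<Rightarrow> complex"
  assumes add_left: "f (x + y) z = f x z + f y z"
    and scale_left: "f (c *\<^sub>C x) y = c * f x y"
    and herm: "f x y = cnj (f y x)"
    and pos: "Im (f x x) = 0 \<and> 0 \<le> Re (f x x)"
begin

lemma add_right: "f x (y + z) = f x y + f x z"
  by (metis add_left complex_cnj_add herm)

lemma scale_right: "f x (c *\<^sub>C y) = cnj c * f x y"
  by (metis complex_cnj_cnj complex_cnj_mult herm scale_left)

lemma zero_left[simp]: "f 0 y = 0"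
  using scale_left[of 0 0 y] by simp

lemma zero_right[simp]: "f x 0 = 0"
  using scale_right[of x 0 0] by simp

lemma minus_left: "f (- x) y = - f x y"
  using scale_left[of "-1" x y] by simp

lemma minus_right: "f x (- y) = - f x y"
  using scale_right[of x "-1" y] by simp

lemma diff_left: "f (x - y) z = f x z - f y z"
  by (simp only: diff_conv_add_uminus add_left minus_left)

lemma diff_right: "f x (y - z) = f x y - f x z"
  by (simp only: diff_conv_add_uminus add_right minus_right)

lemma self_real: "f x x = complex_of_real (Re (f x x))"
  using pos[of x] by (simp add: complex_eq_iff)

lemma self_nonneg: "0 \<le> Re (f x x)" using pos by blast

lemma cnj_swap: "cnj (f x y) = f y x" using herm[of y x] by simp

lemma mult_cnj: "f x y * f y x = complex_of_real ((cmod (f x y))\<^sup>2)"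
  using complex_norm_square[of "f x y"] herm[of y x] by simp

definition nrm :: "'a \<Rightarrow> real" where "nrm x = sqrt (Re (f x x))"

lemma nrm_nonneg: "0 \<le> nrm x" by (simp add: nrm_def self_nonneg)

lemma nrm_sq: "(nrm x)\<^sup>2 = Re (f x x)" by (simp add: nrm_def self_nonneg)

lemma expand_sq: "Re (f (x - c *\<^sub>C y) (x - c *\<^sub>C y)) =
   Re (f x x) - 2 * Re (cnj c * f x y) + (cmod c)\<^sup>2 * Re (f y y)"
proof -
  have "f (x - c *\<^sub>C y) (x - c *\<^sub>C y) = f x (x - c *\<^sub>C y) - f (c *\<^sub>C y) (x - c *\<^sub>C y)"
    by (rule diff_left)
  also have "\<dots> = (f x x - cnj c * f x y) - (c * f y x - cnj c * (c * f y y))"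
    by (simp only: diff_right scale_left scale_right right_diff_distrib)
  finally have "f (x - c *\<^sub>C y) (x - c *\<^sub>C y) = f x x - cnj c * f x y - c * f y x + c * cnj c * f y y"
    by (simp add: algebra_simps)
  moreover have "c * f y x = cnj (cnj c * f x y)" using herm[of y x] by simp
  moreover have "c * cnj c = complex_of_real ((cmod c)\<^sup>2)" using complex_norm_square[of c] by simp
  ultimately show ?thesis by simp
qed

lemma cs_sq: "(cmod (f x y))\<^sup>2 \<le> Re (f x x) * Re (f y y)"
proof (cases "Re (f y y) > 0")
  case True
  define b where "b = Re (f y y)"
  define t where "t = f x y / complex_of_real b"
  have "0 \<le> Re (f (x - t *\<^sub>C y) (x - t *\<^sub>C y))" by (rule self_nonneg)
  also have "\<dots> = Re (f x x) - 2 * Re (cnj t * f x y) + (cmod t)\<^sup>2 * b"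
    unfolding b_def by (rule expand_sq)
  also have "cnj t * f x y = complex_of_real ((cmod (f x y))\<^sup>2 / b)"
    unfolding t_def using complex_norm_square[of "f x y"] by (simp add: mult.commute)
  also have "(cmod t)\<^sup>2 * b = (cmod (f x y))\<^sup>2 / b"
    unfolding t_def using True by (simp add: b_def norm_divide power2_eq_square)
  finally have "0 \<le> Re (f x x) - (cmod (f x y))\<^sup>2 / b" by simp
  hence "(cmod (f x y))\<^sup>2 / b \<le> Re (f x x)" by simp
  thus ?thesis using True unfolding b_def[symmetric] by (simp add: divide_le_eq)
next
  case False
  hence b0: "Re (f y y) = 0" using self_nonneg[of y] by simp
  have "f x y = 0"
  proof (rule ccontr)
    assume ne: "f x y \<noteq> 0"
    define s where "s = (Re (f x x) + 1) / (cmod (f x y))\<^sup>2"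
    define t where "t = complex_of_real s * f x y"
    have "0 \<le> Re (f (x - t *\<^sub>C y) (x - t *\<^sub>C y))" by (rule self_nonneg)
    also have "\<dots> = Re (f x x) - 2 * Re (cnj t * f x y)"
      using expand_sq[of x t y] b0 by simp
    also have "cnj t * f x y = complex_of_real (s * (cmod (f x y))\<^sup>2)"
      unfolding t_def using complex_norm_square[of "f x y"] by (simp add: mult.commute mult.left_commute)
    also have "s * (cmod (f x y))\<^sup>2 = Re (f x x) + 1" using ne by (simp add: s_def)
    finally show False using self_nonneg[of x] by simp
  qed
  thus ?thesis using b0 by simp
qed

lemma cs: "cmod (f x y) \<le> nrm x * nrm y"
proof -
  have "(cmod (f x y))\<^sup>2 \<le> (nrm x * nrm y)\<^sup>2"
    using cs_sq[of x y] by (simp add: power_mult_distrib nrm_sq)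
  moreover have "0 \<le> nrm x * nrm y" using nrm_nonneg[of x] nrm_nonneg[of y] by simp
  ultimately show ?thesis by (rule power2_le_imp_le)
qed

lemma nrm_add: "nrm (x + y) \<le> nrm x + nrm y"
proof -
  have e1: "(nrm (x + y))\<^sup>2 = Re (f x x) + Re (f x y) + Re (f y x) + Re (f y y)"
    unfolding nrm_sq by (simp add: add_left add_right)
  have e2: "Re (f y x) = Re (f x y)" using herm[of y x] by simp
  have e3: "Re (f x y) \<le> nrm x * nrm y" using cs[of x y] complex_Re_le_cmod[of "f x y"] by linarith
  have e4: "(nrm x + nrm y)\<^sup>2 = Re (f x x) + 2 * (nrm x * nrm y) + Re (f y y)"
    unfolding power2_sum nrm_sq by simp
  have "(nrm (x + y))\<^sup>2 \<le> (nrm x + nrm y)\<^sup>2" unfolding e1 e4 e2 using e3 by linarith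
  moreover have "0 \<le> nrm x + nrm y" using nrm_nonneg[of x] nrm_nonneg[of y] by linarith
  ultimately show ?thesis by (rule power2_le_imp_le)
qed

lemma buzano: assumes "nrm e = 1"
  shows "2 * cmod (f a e * f e b) \<le> nrm a * nrm b + cmod (f a b)"
proof -
  define c where "c = f a e"
  define v where "v = (2 * c) *\<^sub>C e - a"
  have "Re (f e e) = 1" using assms nrm_sq[of e] by simp
  hence ee: "f e e = 1" using pos[of e] by (simp add: complex_eq_iff)
  have fea: "f e a = cnj c" unfolding c_def using herm[of e a] .
  have "f v v = cnj (2*c) * (2*c*f e e - f a e) - (2*c*f e a - f a a)"
    unfolding v_def by (simp only: diff_left diff_right scale_left scale_right)
  also have "\<dots> = cnj (2*c) * (2*c - c) - (2*c*cnj c - f a a)"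
    unfolding ee fea c_def by simp
  also have "\<dots> = f a a" by (simp add: algebra_simps)
  finally have vv: "f v v = f a a" .
  have nv: "nrm v = nrm a" unfolding nrm_def vv ..
  have "f v b = 2 * c * f e b - f a b" unfolding v_def by (simp only: diff_left scale_left)
  hence h1: "cmod (2 * c * f e b - f a b) \<le> nrm a * nrm b" using cs[of v b] unfolding nv by simp
  have h2: "cmod (2 * c * f e b) \<le> cmod (2 * c * f e b - f a b) + cmod (f a b)"
    using norm_triangle_ineq[of "2 * c * f e b - f a b" "f a b"] by (simp only: diff_add_cancel)
  have "cmod (2 * c * f e b) = 2 * cmod (f a e * f e b)" unfolding c_def norm_mult by simp
  thus ?thesis using h1 h2 by linarith
qed

end

lemma bcl_add: "bounded_clinear (T::'a::complex_inner\<Rightarrow>'a) \<Longrightarrow> T (x + y) = T x + T y"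
  unfolding bounded_clinear_def by blast
lemma bcl_scale: "bounded_clinear (T::'a::complex_inner\<Rightarrow>'a) \<Longrightarrow> T (c *\<^sub>C x) = c *\<^sub>C T x"
  unfolding bounded_clinear_def by blast
lemma bcl_zero: "bounded_clinear (T::'a::complex_inner\<Rightarrow>'a) \<Longrightarrow> T 0 = 0"
  using bcl_scale[of T 0 0] by simp
lemma bcl_minus: "bounded_clinear (T::'a::complex_inner\<Rightarrow>'a) \<Longrightarrow> T (- x) = - T x"
  using bcl_scale[of T "-1" x] by simp
lemma bcl_diff: "bounded_clinear (T::'a::complex_inner\<Rightarrow>'a) \<Longrightarrow> T (x - y) = T x - T y"
  by (simp only: diff_conv_add_uminus bcl_add bcl_minus)
lemma bcl_bound: fixes T :: "'a::complex_inner\<Rightarrow>'a" assumes "bounded_clinear T"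
  shows "\<exists>K>0. \<forall>x. norm (T x) \<le> norm x * K"
proof -
  obtain K where K: "\<forall>x. norm (T x) \<le> norm x * K" using assms unfolding bounded_clinear_def by blast
  have "\<forall>x. norm (T x) \<le> norm x * (max K 1)"
  proof
    fix x :: 'a have "norm x * K \<le> norm x * max K 1" by (simp add: mult_left_mono)
    thus "norm (T x) \<le> norm x * max K 1" using K by (meson order_trans)
  qed
  thus ?thesis by (intro exI[of _ "max K 1"]) auto
qed

interpretation ci: sesq "cinner :: 'a::complex_inner \<Rightarrow> 'a \<Rightarrow> complex"
  by unfold_locales (auto simp: cinner_add_left cinner_scaleC_left cinner_self_nonneg intro: cinner_commute)

lemma norm_ci: "norm x = ci.nrm x"
  by (simp add: ci.nrm_def norm_eq_sqrt_cinner)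

lemma cinner_eq_zero: "cinner (x::'a::complex_inner) x = 0 \<Longrightarrow> x = 0"
  using cinner_self_eq_zero by blast

lemma cinner_ext: assumes "\<And>z. cinner z (u::'a::complex_inner) = cinner z v" shows "u = v"
proof -
  have "cinner (u - v) (u - v) = 0" using assms[of "u - v"] by (simp add: ci.diff_right)
  thus ?thesis using cinner_eq_zero by fastforce
qed

lemma cinner_ext_left: assumes "\<And>z. cinner (u::'a::complex_inner) z = cinner v z" shows "u = v"
proof -
  have "cinner (u - v) (u - v) = 0" using assms[of "u - v"] by (simp add: ci.diff_left)
  thus ?thesis using cinner_eq_zero by fastforce
qed

lemma bcl_bounded_linear: assumes "bounded_clinear T" shows "norm (T x - T y) \<le> norm (x - y) * (SOME K. K > 0 \<and> (\<forall>x. norm (T x) \<le> norm x * K))"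
proof -
  have "\<exists>K. K > 0 \<and> (\<forall>x. norm (T x) \<le> norm x * K)" using bcl_bound[OF assms] by blast
  from someI_ex[OF this] have "\<forall>z. norm (T z) \<le> norm z * (SOME K. K > 0 \<and> (\<forall>x. norm (T x) \<le> norm x * K))" by blast
  thus ?thesis using bcl_diff[OF assms, of x y] by metis
qed

lemma positive_selfadj:
  assumes "positive_op A" shows "cinner (A x) y = cinner x (A y)"
proof -
  have bA: "bounded_clinear A" using assms unfolding positive_op_def by blast
  have pA: "\<And>z. Im (cinner (A z) z) = 0" using assms unfolding positive_op_def by blast
  define a where "a = cinner (A x) y"
  define b where "b = cinner (A y) x"
  have "cinner (A (x + y)) (x + y) = cinner (A x) x + a + b + cinner (A y) y"
    unfolding a_def b_def by (simp add: bcl_add[OF bA] ci.add_left ci.add_right)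
  hence 1: "Im a + Im b = 0" using pA[of "x+y"] pA[of x] pA[of y] by simp
  have "cinner (A (x + \<i> *\<^sub>C y)) (x + \<i> *\<^sub>C y) = cinner (A x) x + (- \<i>) * a + \<i> * b + cinner (A y) y"
    unfolding a_def b_def
    by (simp add: bcl_add[OF bA] bcl_scale[OF bA] ci.add_left ci.add_right ci.scale_left ci.scale_right)
       (simp add: algebra_simps complex_i_mult_minus)
  hence 2: "Re b - Re a = 0" using pA[of "x + \<i> *\<^sub>C y"] pA[of x] pA[of y] by simp
  have "a = cnj b" using 1 2 by (simp add: complex_eq_iff)
  thus ?thesis unfolding a_def b_def using cinner_commute[of x "A y"] by simp
qed

lemma sesq_A: assumes "positive_op A" shows "sesq (A_inner A)"
proof -
  have bA: "bounded_clinear A" using assms unfolding positive_op_def by blast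
  show ?thesis
  proof
    fix x y z c
    show "A_inner A (x + y) z = A_inner A x z + A_inner A y z"
      unfolding A_inner_def by (simp add: bcl_add[OF bA] ci.add_left)
    show "A_inner A (c *\<^sub>C x) y = c * A_inner A x y"
      unfolding A_inner_def by (simp add: bcl_scale[OF bA] ci.scale_left)
    show "A_inner A x y = cnj (A_inner A y x)"
      unfolding A_inner_def using positive_selfadj[OF assms, of y x] cinner_commute[of "A x" y] by simp
    show "Im (A_inner A x x) = 0 \<and> 0 \<le> Re (A_inner A x x)"
      using assms unfolding positive_op_def A_inner_def by blast
  qed
qed

lemma A_seminorm_nrm: "positive_op A \<Longrightarrow> A_seminorm A x = sesq.nrm (A_inner A) x"
  by (simp add: A_seminorm_def sesq.nrm_def[OF sesq_A])

lemma norm_sq_ci: "(norm (x::'a::complex_inner))\<^sup>2 = Re (cinner x x)"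
  by (simp add: norm_ci ci.nrm_sq)

lemma parallelogram: "(norm ((a::'a::complex_inner) + b))\<^sup>2 + (norm (a - b))\<^sup>2 = 2 * (norm a)\<^sup>2 + 2 * (norm b)\<^sup>2"
  unfolding norm_sq_ci by (simp add: ci.add_left ci.add_right ci.diff_left ci.diff_right)

lemma closed_zero_set:
  fixes g :: "'a::real_normed_vector \<Rightarrow> 'b::real_normed_vector"
  assumes "\<And>x y. norm (g x - g y) \<le> K * norm (x - y)"
  shows "closed {x. g x = 0}"
  unfolding closed_sequential_limits
proof (intro allI impI, elim conjE)
  fix s l assume s: "\<forall>n. s n \<in> {x. g x = 0}" and lim: "s \<longlonglongrightarrow> l"
  have "(\<lambda>n. K * norm (l - s n)) \<longlonglongrightarrow> K * norm (l - l)"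
    by (intro tendsto_intros lim)
  hence t: "(\<lambda>n. K * norm (l - s n)) \<longlonglongrightarrow> 0" by simp
  have "\<forall>n. norm (g l) \<le> K * norm (l - s n)"
  proof
    fix n
    have "g (s n) = 0" using s by blast
    thus "norm (g l) \<le> K * norm (l - s n)" using assms[of l "s n"] by simp
  qed
  hence "norm (g l) \<le> 0" using t by (intro LIMSEQ_le_const[OF t]) auto
  thus "l \<in> {x. g x = 0}" by simp
qed

lemma proj_exists:
  fixes M :: "'a::chilbert_space set"
  assumes cl: "closed M" and z: "0 \<in> M" and ad: "\<And>x y. x \<in> M \<Longrightarrow> y \<in> M \<Longrightarrow> x + y \<in> M"
    and sc: "\<And>c x. x \<in> M \<Longrightarrow> c *\<^sub>C x \<in> M"
  shows "\<exists>p\<in>M. \<forall>m\<in>M. cinner (w - p) m = 0"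
proof -
  define D where "D = (\<lambda>m. norm (w - m)) ` M"
  define d where "d = Inf D"
  have Dne: "D \<noteq> {}" using z unfolding D_def by blast
  have Dbdd: "bdd_below D" unfolding D_def by (rule bdd_belowI[of _ 0]) auto
  have dle: "\<And>m. m \<in> M \<Longrightarrow> d \<le> norm (w - m)"
    unfolding d_def D_def using Dbdd D_def by (intro cInf_lower) auto
  have d0: "0 \<le> d" using dle[OF z] Dne Dbdd unfolding d_def D_def
    by (intro cInf_greatest) auto
  have "\<forall>n. \<exists>m. m \<in> M \<and> (norm (w - m))\<^sup>2 < d\<^sup>2 + inverse (real (Suc n))"
  proof
    fix n
    have "sqrt (d\<^sup>2) < sqrt (d\<^sup>2 + inverse (real (Suc n)))"
      by (rule real_sqrt_less_mono) simp
    hence "d < sqrt (d\<^sup>2 + inverse (real (Suc n)))" using d0 by simp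
    then obtain e where "e \<in> D" "e < sqrt (d\<^sup>2 + inverse (real (Suc n)))"
      using cInf_lessD[OF Dne] unfolding d_def by blast
    then obtain m where m: "m \<in> M" "norm (w - m) < sqrt (d\<^sup>2 + inverse (real (Suc n)))"
      unfolding D_def by blast
    have "(norm (w - m))\<^sup>2 < (sqrt (d\<^sup>2 + inverse (real (Suc n))))\<^sup>2"
      by (rule power_strict_mono[OF m(2)]) auto
    hence "(norm (w - m))\<^sup>2 < d\<^sup>2 + inverse (real (Suc n))"
      by (simp add: add_nonneg_nonneg)
    thus "\<exists>m. m \<in> M \<and> (norm (w - m))\<^sup>2 < d\<^sup>2 + inverse (real (Suc n))" using m by blast
  qed
  then obtain m where mM: "\<And>n. m n \<in> M" and mb: "\<And>n. (norm (w - m n))\<^sup>2 < d\<^sup>2 + inverse (real (Suc n))"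
    by metis
  have pb: "(norm (m k - m n))\<^sup>2 \<le> 2 * inverse (real (Suc n)) + 2 * inverse (real (Suc k))" for n k
  proof -
    define a where "a = w - m n"
    define b where "b = w - m k"
    define mid where "mid = (1/2::real) *\<^sub>R (m n + m k)"
    have midM: "mid \<in> M" unfolding mid_def scaleR_scaleC by (intro sc ad mM)
    have "a + b = 2 *\<^sub>R (w - mid)" unfolding a_def b_def mid_def by (simp add: algebra_simps) (simp only: scaleR_2)
    hence "norm (a + b) = 2 * norm (w - mid)" by simp
    hence h: "norm (a + b) \<ge> 2 * d" using dle[OF midM] by simp
    have "(norm (a + b))\<^sup>2 \<ge> (2 * d)\<^sup>2" by (rule power_mono[OF h]) (simp add: d0)
    moreover have "a - b = m k - m n" unfolding a_def b_def by simp
    moreover note parallelogram[of a b]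
    moreover have "(norm a)\<^sup>2 < d\<^sup>2 + inverse (real (Suc n))" using mb unfolding a_def by blast
    moreover have "(norm b)\<^sup>2 < d\<^sup>2 + inverse (real (Suc k))" using mb unfolding b_def by blast
    ultimately show ?thesis by (simp add: power_mult_distrib)
  qed
  have "Cauchy m"
  proof (rule CauchyI)
    fix e :: real assume e: "0 < e"
    obtain N where N: "inverse (real (Suc N)) < e\<^sup>2 / 4" using reals_Archimedean[of "e\<^sup>2/4"] e by auto
    show "\<exists>M. \<forall>k\<ge>M. \<forall>n\<ge>M. norm (m k - m n) < e"
    proof (intro exI allI impI)
      fix k n assume k: "N \<le> k" and n: "N \<le> n"
      have "inverse (real (Suc n)) \<le> inverse (real (Suc N))" using n by (simp add: le_imp_inverse_le)
      moreover have "inverse (real (Suc k)) \<le> inverse (real (Suc N))" using k by (simp add: le_imp_inverse_le)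
      ultimately have "(norm (m k - m n))\<^sup>2 < e\<^sup>2" using pb[of k n] N by linarith
      thus "norm (m k - m n) < e" using e power2_less_imp_less[of "norm (m k - m n)" e] by simp
    qed
  qed
  then obtain p where lim: "m \<longlonglongrightarrow> p" using Cauchy_convergent_iff convergent_def by blast
  have pM: "p \<in> M" using cl mM lim closed_sequentially by blast
  have "(\<lambda>n. (norm (w - m n))\<^sup>2) \<longlonglongrightarrow> (norm (w - p))\<^sup>2" by (intro tendsto_intros lim)
  moreover have "(\<lambda>n. d\<^sup>2 + inverse (real (Suc n))) \<longlonglongrightarrow> d\<^sup>2" by (rule LIMSEQ_inverse_real_of_nat_add)
  ultimately have "(norm (w - p))\<^sup>2 \<le> d\<^sup>2" using mb by (intro LIMSEQ_le) (auto intro: less_imp_le)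
  hence minp: "(norm (w - p))\<^sup>2 \<le> (norm (w - m'))\<^sup>2" if "m' \<in> M" for m'
  proof -
    have "d\<^sup>2 \<le> (norm (w - m'))\<^sup>2" by (rule power_mono[OF dle[OF that] d0])
    thus ?thesis using \<open>(norm (w - p))\<^sup>2 \<le> d\<^sup>2\<close> by linarith
  qed
  have "\<forall>m'\<in>M. cinner (w - p) m' = 0"
  proof (intro ballI, rule ccontr)
    fix m' assume m'M: "m' \<in> M" and ne: "cinner (w - p) m' \<noteq> 0"
    define c where "c = cinner (w - p) m'"
    define s where "s = 1 / ((norm m')\<^sup>2 + 1)"
    define t where "t = complex_of_real s * c"
    have "0 < (norm m')\<^sup>2 + 1" by (simp add: add_nonneg_pos)
    hence s0: "0 < s" unfolding s_def by simp
    have s1: "s * (norm m')\<^sup>2 < 1" unfolding s_def using \<open>0 < (norm m')\<^sup>2 + 1\<close> by (simp add: divide_less_eq)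
    have "p + t *\<^sub>C m' \<in> M" by (intro ad pM sc m'M)
    hence "(norm (w - p))\<^sup>2 \<le> (norm ((w - p) - t *\<^sub>C m'))\<^sup>2"
      using minp by (metis diff_diff_eq)
    also have "\<dots> = (norm (w - p))\<^sup>2 - 2 * Re (cnj t * c) + (cmod t)\<^sup>2 * (norm m')\<^sup>2"
      unfolding norm_sq_ci c_def by (rule ci.expand_sq)
    also have "cnj t * c = complex_of_real (s * (cmod c)\<^sup>2)"
      unfolding t_def using complex_norm_square[of c] by (simp add: mult.commute mult.left_commute)
    also have "(cmod t)\<^sup>2 = s\<^sup>2 * (cmod c)\<^sup>2" unfolding t_def using s0 by (simp add: norm_mult power_mult_distrib)
    finally have f1: "0 \<le> s\<^sup>2 * (cmod c)\<^sup>2 * (norm m')\<^sup>2 - 2 * (s * (cmod c)\<^sup>2)" by simp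
    have eq: "s * (cmod c)\<^sup>2 * (s * (norm m')\<^sup>2 - 2) = s\<^sup>2 * (cmod c)\<^sup>2 * (norm m')\<^sup>2 - 2 * (s * (cmod c)\<^sup>2)"
      by (simp add: algebra_simps power2_eq_square)
    have "0 < s * (cmod c)\<^sup>2" using s0 ne c_def by simp
    moreover have "s * (norm m')\<^sup>2 - 2 < 0" using s1 by simp
    ultimately have "s * (cmod c)\<^sup>2 * (s * (norm m')\<^sup>2 - 2) < 0" by (rule mult_pos_neg)
    thus False using f1 eq by linarith
  qed
  thus ?thesis using pM by blast
qed

lemma riesz:
  fixes f :: "'a::chilbert_space \<Rightarrow> complex"
  assumes add: "\<And>x y. f (x + y) = f x + f y" and scale: "\<And>c x. f (c *\<^sub>C x) = c * f x"
    and bnd: "\<And>x. cmod (f x) \<le> K * norm x"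
  shows "\<exists>v. \<forall>x. f x = cinner x v"
proof (cases "\<forall>x. f x = 0")
  case True thus ?thesis by (intro exI[of _ 0]) simp
next
  case False
  then obtain u where fu: "f u \<noteq> 0" by blast
  have f0: "f 0 = 0" using scale[of 0 0] by simp
  have fm: "f (- x) = - f x" for x using scale[of "-1" x] by simp
  have fd: "f (x - y) = f x - f y" for x y by (simp only: diff_conv_add_uminus add fm)
  define N where "N = {x. f x = 0}"
  have clN: "closed N" unfolding N_def
    by (rule closed_zero_set[of _ K]) (simp only: fd[symmetric] bnd)
  obtain p where pN: "p \<in> N" and orth: "\<forall>m\<in>N. cinner (u - p) m = 0"
    using proj_exists[OF clN, of u] unfolding N_def by (auto simp: f0 add scale)
  define q where "q = u - p"
  have fq: "f q = f u" using pN unfolding q_def N_def by (simp add: fd)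
  have qq: "cinner q q \<noteq> 0"
  proof
    assume "cinner q q = 0" hence "q = 0" by (rule cinner_eq_zero)
    thus False using fq fu f0 by simp
  qed
  define v where "v = cnj (f q / cinner q q) *\<^sub>C q"
  have "f x = cinner x v" for x
  proof -
    define z where "z = f x *\<^sub>C q - f q *\<^sub>C x"
    have "f z = 0" unfolding z_def by (simp add: fd scale)
    hence "cinner q z = 0" using orth unfolding N_def q_def by blast
    hence "cinner z q = 0" using cinner_commute[of z q] by simp
    hence "f x * cinner q q - f q * cinner x q = 0" unfolding z_def by (simp add: ci.diff_left ci.scale_left)
    hence "f x = f q * cinner x q / cinner q q" using qq by (simp add: field_simps)
    thus ?thesis unfolding v_def by (simp add: ci.scale_right)
  qed
  thus ?thesis by blast
qed

lemma adj_exists: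
  fixes T :: "'a::chilbert_space \<Rightarrow> 'a"
  assumes bT: "bounded_clinear T"
  shows "bounded_clinear (adj T) \<and> (\<forall>x y. cinner (T x) y = cinner x (adj T y))"
proof -
  obtain K where K0: "K > 0" and K: "\<And>x. norm (T x) \<le> norm x * K" using bcl_bound[OF bT] by blast
  have "\<forall>y. \<exists>v. \<forall>x. cinner (T x) y = cinner x v"
  proof
    fix y
    show "\<exists>v. \<forall>x. cinner (T x) y = cinner x v"
    proof (rule riesz[of _ "K * norm y"])
      fix x1 x2 c x
      show "cinner (T (x1 + x2)) y = cinner (T x1) y + cinner (T x2) y"
        by (simp add: bcl_add[OF bT] ci.add_left)
      show "cinner (T (c *\<^sub>C x)) y = c * cinner (T x) y"
        by (simp add: bcl_scale[OF bT] ci.scale_left)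
      have "cmod (cinner (T x) y) \<le> norm (T x) * norm y" unfolding norm_ci by (rule ci.cs)
      also have "\<dots> \<le> norm x * K * norm y" by (rule mult_right_mono[OF K]) simp
      finally show "cmod (cinner (T x) y) \<le> K * norm y * norm x" by (simp add: algebra_simps)
    qed
  qed
  then obtain S where S: "\<And>y x. cinner (T x) y = cinner x (S y)" by metis
  have bS: "bounded_clinear S"
    unfolding bounded_clinear_def
  proof (intro conjI allI)
    fix y1 y2
    show "S (y1 + y2) = S y1 + S y2"
      by (rule cinner_ext) (simp add: S[symmetric] ci.add_right)
  next
    fix c y
    show "S (c *\<^sub>C y) = c *\<^sub>C S y"
      by (rule cinner_ext) (simp add: S[symmetric] ci.scale_right)
  next
    have "norm (S y) \<le> norm y * K" for y
    proof (cases "norm (S y) = 0")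
      case True thus ?thesis using K0 by simp
    next
      case False
      have "(norm (S y))\<^sup>2 = Re (cinner (T (S y)) y)" unfolding norm_sq_ci S ..
      also have "\<dots> \<le> cmod (cinner (T (S y)) y)" by (rule complex_Re_le_cmod)
      also have "\<dots> \<le> norm (T (S y)) * norm y" unfolding norm_ci by (rule ci.cs)
      also have "\<dots> \<le> norm (S y) * K * norm y" by (rule mult_right_mono[OF K]) simp
      finally have "norm (S y) * norm (S y) \<le> norm (S y) * (norm y * K)"
        by (simp add: power2_eq_square algebra_simps)
      thus ?thesis using False by (simp add: mult_le_cancel_left)
    qed
    thus "\<exists>K. \<forall>x. norm (S x) \<le> norm x * K" by blast
  qed
  have "adj T = S"
    unfolding adj_def
  proof (rule the_equality)
    show "bounded_clinear S \<and> (\<forall>x y. cinner (T x) y = cinner x (S y))" using bS S by blast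
  next
    fix S' assume "bounded_clinear S' \<and> (\<forall>x y. cinner (T x) y = cinner x (S' y))"
    hence S': "\<And>x y. cinner (T x) y = cinner x (S' y)" by blast
    show "S' = S"
    proof
      fix y show "S' y = S y" by (rule cinner_ext) (simp add: S'[symmetric] S[symmetric])
    qed
  qed
  thus ?thesis using bS S by simp
qed

lemma mp_inv_range:
  fixes A :: "'a::chilbert_space \<Rightarrow> 'a"
  assumes bA: "bounded_clinear A"
  shows "A (mp_inv A (A w)) = A w"
proof -
  obtain K where K0: "K > 0" and K: "\<And>x. norm (A x) \<le> norm x * K" using bcl_bound[OF bA] by blast
  define N where "N = {x. A x = 0}"
  have clN: "closed N" unfolding N_def
  proof (rule closed_zero_set[of _ K])
    fix x y show "norm (A x - A y) \<le> K * norm (x - y)"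
      using K[of "x - y"] by (simp add: bcl_diff[OF bA] mult.commute)
  qed
  obtain p where pN: "p \<in> N" and orth: "\<forall>m\<in>N. cinner (w - p) m = 0"
    using proj_exists[OF clN, of w] unfolding N_def
    by (auto simp: bcl_zero[OF bA] bcl_add[OF bA] bcl_scale[OF bA])
  define P where "P = (\<lambda>z. (\<forall>n. A n = 0 \<longrightarrow> cinner z n = 0) \<and> A z = A w)"
  have "P (w - p)" unfolding P_def using orth pN unfolding N_def by (simp add: bcl_diff[OF bA])
  moreover have "z1 = z2" if "P z1" "P z2" for z1 z2
  proof -
    have "A (z1 - z2) = 0" using that unfolding P_def by (simp add: bcl_diff[OF bA])
    hence "cinner z1 (z1 - z2) = 0" "cinner z2 (z1 - z2) = 0" using that unfolding P_def by blast+
    hence "cinner (z1 - z2) (z1 - z2) = 0" by (simp add: ci.diff_left)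
    thus ?thesis using cinner_eq_zero by fastforce
  qed
  ultimately have "\<exists>!z. P z" by blast
  hence "P (THE z. P z)" by (rule theI')
  moreover have "mp_inv A (A w) = (THE z. P z)" unfolding mp_inv_def P_def ..
  ultimately show ?thesis unfolding P_def by simp
qed

lemma sharp_adj:
  fixes A T :: "'a::chilbert_space \<Rightarrow> 'a"
  assumes pA: "positive_op A" and TB: "T \<in> B_A A"
  shows "A_inner A (T x) y = A_inner A x (A_sharp A T y)"
proof -
  have bA: "bounded_clinear A" using pA unfolding positive_op_def by blast
  have bT: "bounded_clinear T" using TB unfolding B_A_def by blast
  obtain S' where bS': "bounded_clinear S'" and S': "\<And>x y. A_inner A (T x) y = A_inner A x (S' y)"
    using TB unfolding B_A_def by blast
  have adjT: "\<And>x y. cinner (T x) y = cinner x (adj T y)" using adj_exists[OF bT] by blast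
  have w: "adj T (A y) = A (S' y)"
  proof (rule cinner_ext)
    fix z
    have "cinner z (adj T (A y)) = cinner (T z) (A y)" by (rule adjT[symmetric])
    also have "\<dots> = cinner (A (T z)) y" by (rule positive_selfadj[OF pA, symmetric])
    also have "\<dots> = A_inner A z (S' y)" using S'[of z y] unfolding A_inner_def .
    also have "\<dots> = cinner z (A (S' y))" unfolding A_inner_def by (rule positive_selfadj[OF pA])
    finally show "cinner z (adj T (A y)) = cinner z (A (S' y))" .
  qed
  have "A_inner A x (A_sharp A T y) = cinner (A x) (mp_inv A (A (S' y)))"
    unfolding A_inner_def A_sharp_def w ..
  also have "\<dots> = cinner x (A (mp_inv A (A (S' y))))" by (rule positive_selfadj[OF pA])
  also have "\<dots> = cinner x (adj T (A y))" unfolding mp_inv_range[OF bA] w ..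
  also have "\<dots> = cinner (T x) (A y)" by (rule adjT[symmetric])
  also have "\<dots> = A_inner A (T x) y" unfolding A_inner_def by (rule positive_selfadj[OF pA, symmetric])
  finally show ?thesis ..
qed

lemma (in sesq) nrm_scale: "nrm (c *\<^sub>C x) = cmod c * nrm x"
proof -
  have "f (c *\<^sub>C x) (c *\<^sub>C x) = (c * cnj c) * f x x" by (simp add: scale_left scale_right)
  also have "c * cnj c = complex_of_real ((cmod c)\<^sup>2)" using complex_norm_square[of c] by simp
  finally have "Re (f (c *\<^sub>C x) (c *\<^sub>C x)) = (cmod c)\<^sup>2 * Re (f x x)" by simp
  thus ?thesis unfolding nrm_def by (simp add: real_sqrt_mult)
qed

lemma (in sesq) re_le: "Re (f x y) \<le> nrm x * nrm y"
  using cs[of x y] complex_Re_le_cmod[of "f x y"] by linarith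

context
  fixes A :: "'a::chilbert_space \<Rightarrow> 'a"
  assumes pA: "positive_op A"
begin

interpretation a: sesq "A_inner A" by (rule sesq_A[OF pA])

lemma bA: "bounded_clinear A" using pA unfolding positive_op_def by blast

lemma nA_le_norm: "\<exists>KA>0. \<forall>z. (a.nrm z)\<^sup>2 \<le> KA * (norm z)\<^sup>2"
proof -
  obtain KA where KA0: "KA > 0" and KA: "\<And>x. norm (A x) \<le> norm x * KA" using bcl_bound[OF bA] by blast
  have "(a.nrm z)\<^sup>2 \<le> KA * (norm z)\<^sup>2" for z
  proof -
    have "(a.nrm z)\<^sup>2 = Re (cinner (A z) z)" unfolding a.nrm_sq A_inner_def ..
    also have "\<dots> \<le> cmod (cinner (A z) z)" by (rule complex_Re_le_cmod)
    also have "\<dots> \<le> norm (A z) * norm z" unfolding norm_ci by (rule ci.cs)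
    also have "\<dots> \<le> norm z * KA * norm z" by (rule mult_right_mono[OF KA]) simp
    finally show ?thesis by (simp add: power2_eq_square algebra_simps)
  qed
  thus ?thesis using KA0 by blast
qed

lemma unit_bound:
  fixes R :: "'a \<Rightarrow> 'a"
  assumes KR0: "KR > 0" and KR: "\<And>z. norm (R z) \<le> norm z * KR"
    and sym: "\<And>u v. A_inner A (R u) v = A_inner A u (R v)"
    and x1: "a.nrm x = 1"
  shows "a.nrm (R x) \<le> KR"
proof (rule ccontr)
  assume "\<not> a.nrm (R x) \<le> KR"
  hence gt: "KR < a.nrm (R x)" by simp
  obtain KA where KA0: "KA > 0" and KA: "\<And>z. (a.nrm z)\<^sup>2 \<le> KA * (norm z)\<^sup>2" using nA_le_norm by blast
  define b where "b = (\<lambda>k. a.nrm ((R ^^ k) x))"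
  have symk: "A_inner A ((R ^^ k) u) v = A_inner A u ((R ^^ k) v)" for k u v
  proof (induction k arbitrary: v)
    case 0 show ?case by simp
  next
    case (Suc k)
    have "A_inner A ((R ^^ Suc k) u) v = A_inner A ((R ^^ k) u) (R v)" by (simp add: sym)
    also have "\<dots> = A_inner A u ((R ^^ k) (R v))" by (rule Suc.IH)
    also have "(R ^^ k) (R v) = (R ^^ Suc k) v" by (simp add: funpow_Suc_right del: funpow.simps)
    finally show ?case .
  qed
  have bsq: "(b k)\<^sup>2 \<le> b (2 * k)" for k
  proof -
    have "(b k)\<^sup>2 = Re (A_inner A x ((R ^^ k) ((R ^^ k) x)))" unfolding b_def a.nrm_sq symk ..
    also have "(R ^^ k) ((R ^^ k) x) = (R ^^ (2 * k)) x" by (simp add: mult_2 funpow_add)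
    also have "Re (A_inner A x ((R ^^ (2 * k)) x)) \<le> a.nrm x * b (2 * k)" unfolding b_def by (rule a.re_le)
    finally show ?thesis using x1 by simp
  qed
  have b1: "b 1 = a.nrm (R x)" unfolding b_def by simp
  have b0: "\<And>k. 0 \<le> b k" unfolding b_def by (rule a.nrm_nonneg)
  have pow: "(b 1) ^ (2 ^ m) \<le> b (2 ^ m)" for m
  proof (induction m)
    case 0 show ?case by simp
  next
    case (Suc m)
    have "(b 1) ^ (2 ^ Suc m) = ((b 1) ^ (2 ^ m))\<^sup>2" by (simp add: power_mult[symmetric] mult.commute)
    also have "\<dots> \<le> (b (2 ^ m))\<^sup>2" by (rule power_mono[OF Suc.IH]) (simp add: b0)
    also have "\<dots> \<le> b (2 * 2 ^ m)" by (rule bsq)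
    finally show ?case by simp
  qed
  have normk: "norm ((R ^^ k) x) \<le> KR ^ k * norm x" for k
  proof (induction k)
    case 0 show ?case by simp
  next
    case (Suc k)
    have "norm ((R ^^ Suc k) x) \<le> norm ((R ^^ k) x) * KR" by (simp add: KR)
    also have "\<dots> \<le> KR ^ k * norm x * KR" by (rule mult_right_mono[OF Suc.IH]) (use KR0 in simp)
    finally show ?case by (simp add: algebra_simps)
  qed
  define C where "C = sqrt KA * norm x"
  have bk: "b k \<le> KR ^ k * C" for k
  proof -
    have "(b k)\<^sup>2 \<le> KA * (norm ((R ^^ k) x))\<^sup>2" unfolding b_def by (rule KA)
    also have "\<dots> \<le> KA * (KR ^ k * norm x)\<^sup>2"
      by (rule mult_left_mono[OF power_mono[OF normk]]) (use KA0 in simp_all)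
    also have "\<dots> = (KR ^ k * C)\<^sup>2" unfolding C_def using KA0 by (simp add: power_mult_distrib)
    finally show ?thesis using b0[of k] KR0 unfolding C_def
      by (meson power2_le_imp_le mult_nonneg_nonneg norm_ge_zero real_sqrt_ge_zero zero_le_power less_imp_le KA0)
  qed
  define r where "r = b 1 / KR"
  have r1: "1 < r" unfolding r_def using gt b1 KR0 by simp
  obtain m where m: "C < r ^ m" using real_arch_pow[OF r1] by blast
  have "r ^ m \<le> r ^ (2 ^ m)" by (rule power_increasing) (use r1 in \<open>auto simp: less_imp_le\<close>)
  also have "r ^ (2 ^ m) = (b 1) ^ (2 ^ m) / KR ^ (2 ^ m)" unfolding r_def by (simp add: power_divide)
  also have "\<dots> \<le> b (2 ^ m) / KR ^ (2 ^ m)" by (rule divide_right_mono[OF pow]) (use KR0 in simp)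
  also have "\<dots> \<le> C" using bk[of "2 ^ m"] KR0 by (simp add: divide_le_eq mult.commute)
  finally show False using m by simp
qed

end

context
  fixes A :: "'a::chilbert_space \<Rightarrow> 'a"
  assumes pA: "positive_op A"
begin

interpretation a: sesq "A_inner A" by (rule sesq_A[OF pA])

lemma BA_bounded:
  assumes TB: "T \<in> B_A A"
  shows "\<exists>C\<ge>0. \<forall>x. a.nrm (T x) \<le> C * a.nrm x"
proof -
  have bT: "bounded_clinear T" using TB unfolding B_A_def by blast
  obtain S' where bS': "bounded_clinear S'" and S': "\<And>x y. A_inner A (T x) y = A_inner A x (S' y)"
    using TB unfolding B_A_def by blast
  obtain K1 where K10: "K1 > 0" and K1: "\<And>x. norm (T x) \<le> norm x * K1" using bcl_bound[OF bT] by blast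
  obtain K2 where K20: "K2 > 0" and K2: "\<And>x. norm (S' x) \<le> norm x * K2" using bcl_bound[OF bS'] by blast
  define R where "R = (\<lambda>z. S' (T z))"
  define KR where "KR = K1 * K2"
  have KR0: "KR > 0" unfolding KR_def using K10 K20 by simp
  have KR: "norm (R z) \<le> norm z * KR" for z
  proof -
    have "norm (R z) \<le> norm (T z) * K2" unfolding R_def by (rule K2)
    also have "\<dots> \<le> norm z * K1 * K2" by (rule mult_right_mono[OF K1]) (use K20 in simp)
    finally show ?thesis unfolding KR_def by (simp add: algebra_simps)
  qed
  have sym: "A_inner A (R u) v = A_inner A u (R v)" for u v
  proof -
    have "A_inner A (R u) v = cnj (A_inner A v (R u))" by (rule a.herm)
    also have "A_inner A v (R u) = A_inner A (T v) (T u)" unfolding R_def by (rule S'[symmetric])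
    also have "cnj (A_inner A (T v) (T u)) = A_inner A (T u) (T v)" by (rule a.cnj_swap)
    also have "\<dots> = A_inner A u (R v)" unfolding R_def by (rule S')
    finally show ?thesis .
  qed
  have Rb: "a.nrm (R x) \<le> KR * a.nrm x" for x
  proof (cases "a.nrm x = 0")
    case True
    have "(a.nrm (R x))\<^sup>2 = Re (A_inner A x (R (R x)))" unfolding a.nrm_sq sym ..
    also have "\<dots> \<le> a.nrm x * a.nrm (R (R x))" by (rule a.re_le)
    finally have "(a.nrm (R x))\<^sup>2 \<le> 0" using True by simp
    hence "a.nrm (R x) = 0" using a.nrm_nonneg[of "R x"] by (simp add: power2_eq_square mult_le_0_iff)
    thus ?thesis using True by simp
  next
    case False
    hence n0: "a.nrm x > 0" using a.nrm_nonneg[of x] by simp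
    define c where "c = complex_of_real (1 / a.nrm x)"
    have "a.nrm (c *\<^sub>C x) = 1" unfolding a.nrm_scale c_def using n0 by (simp add: norm_divide)
    hence u: "a.nrm (R (c *\<^sub>C x)) \<le> KR" by (rule unit_bound[OF pA KR0 KR sym])
    have "R (c *\<^sub>C x) = c *\<^sub>C R x" unfolding R_def by (simp add: bcl_scale[OF bT] bcl_scale[OF bS'])
    hence "cmod c * a.nrm (R x) \<le> KR" using u by (simp only: a.nrm_scale)
    moreover have "cmod c = 1 / a.nrm x" unfolding c_def using n0 by (simp add: norm_divide)
    ultimately have "a.nrm (R x) / a.nrm x \<le> KR" by simp
    thus ?thesis using n0 by (simp add: divide_le_eq mult.commute)
  qed
  have "a.nrm (T x) \<le> sqrt KR * a.nrm x" for x
  proof -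
    have "(a.nrm (T x))\<^sup>2 = Re (A_inner A x (R x))" unfolding a.nrm_sq S' R_def ..
    also have "\<dots> \<le> a.nrm x * a.nrm (R x)" by (rule a.re_le)
    also have "\<dots> \<le> a.nrm x * (KR * a.nrm x)" by (rule mult_left_mono[OF Rb a.nrm_nonneg])
    also have "\<dots> = (sqrt KR * a.nrm x)\<^sup>2" using KR0 by (simp add: power_mult_distrib power2_eq_square)
    finally show ?thesis
      using a.nrm_nonneg[of x] KR0 power2_le_imp_le[of "a.nrm (T x)" "sqrt KR * a.nrm x"] by simp
  qed
  thus ?thesis by (intro exI[of _ "sqrt KR"]) (simp add: KR0 less_imp_le)
qed

lemma sharp_bounded:
  assumes TB: "T \<in> B_A A" and C0: "C \<ge> 0" and C: "\<And>x. a.nrm (T x) \<le> C * a.nrm x"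
  shows "a.nrm (A_sharp A T y) \<le> C * a.nrm y"
proof (cases "a.nrm (A_sharp A T y) = 0")
  case True thus ?thesis using C0 a.nrm_nonneg[of y] by simp
next
  case False
  hence n0: "a.nrm (A_sharp A T y) > 0" using a.nrm_nonneg by (simp add: order_less_le)
  have "(a.nrm (A_sharp A T y))\<^sup>2 = Re (A_inner A (T (A_sharp A T y)) y)"
    unfolding a.nrm_sq sharp_adj[OF pA TB] ..
  also have "\<dots> \<le> a.nrm (T (A_sharp A T y)) * a.nrm y" by (rule a.re_le)
  also have "\<dots> \<le> C * a.nrm (A_sharp A T y) * a.nrm y" by (rule mult_right_mono[OF C a.nrm_nonneg])
  finally have "a.nrm (A_sharp A T y) * a.nrm (A_sharp A T y) \<le> a.nrm (A_sharp A T y) * (C * a.nrm y)"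
    by (simp add: power2_eq_square algebra_simps)
  thus ?thesis using n0 by (simp add: mult_le_cancel_left)
qed

lemma numrad_ge:
  assumes C: "\<And>x. a.nrm (Q x) \<le> C * a.nrm x" and x1: "a.nrm x = 1"
  shows "cmod (A_inner A (Q x) x) \<le> A_numrad A Q"
  unfolding A_numrad_def
proof (rule cSup_upper)
  show "cmod (A_inner A (Q x) x) \<in> {cmod (A_inner A (Q x) x) |x. A_seminorm A x = 1}"
    using x1 A_seminorm_nrm[OF pA] by auto
  show "bdd_above {cmod (A_inner A (Q x) x) |x. A_seminorm A x = 1}"
  proof (rule bdd_aboveI)
    fix v assume "v \<in> {cmod (A_inner A (Q x) x) |x. A_seminorm A x = 1}"
    then obtain z where z: "a.nrm z = 1" "v = cmod (A_inner A (Q z) z)" using A_seminorm_nrm[OF pA] by auto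
    have "v \<le> a.nrm (Q z) * a.nrm z" using a.cs[of "Q z" z] z(2) by simp
    also have "\<dots> \<le> C" using C[of z] z by simp
    finally show "v \<le> C" .
  qed
qed

lemma opnorm_ge:
  assumes C: "\<And>x. a.nrm (Q x) \<le> C * a.nrm x" and x1: "a.nrm x = 1"
  shows "a.nrm (Q x) \<le> A_opnorm A Q"
  unfolding A_opnorm_def
proof (rule cSup_upper)
  show "a.nrm (Q x) \<in> {A_seminorm A (Q x) |x. A_seminorm A x = 1}"
    using x1 A_seminorm_nrm[OF pA] by auto
  show "bdd_above {A_seminorm A (Q x) |x. A_seminorm A x = 1}"
  proof (rule bdd_aboveI)
    fix v assume "v \<in> {A_seminorm A (Q x) |x. A_seminorm A x = 1}"
    then obtain z where z: "a.nrm z = 1" "v = a.nrm (Q z)" using A_seminorm_nrm[OF pA] by auto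
    show "v \<le> C" using C[of z] z by simp
  qed
qed

lemma exists_unit:
  assumes "A \<noteq> (\<lambda>x. 0)"
  shows "\<exists>x. a.nrm x = 1"
proof -
  obtain x0 where x0: "A x0 \<noteq> 0" using assms by blast
  have "\<exists>x1. a.nrm x1 \<noteq> 0"
  proof (rule ccontr)
    assume "\<not> (\<exists>x1. a.nrm x1 \<noteq> 0)"
    hence z: "\<And>x1. a.nrm x1 = 0" by blast
    have "cmod (A_inner A x0 (A x0)) \<le> a.nrm x0 * a.nrm (A x0)" by (rule a.cs)
    hence "cinner (A x0) (A x0) = 0" using z unfolding A_inner_def by simp
    thus False using x0 cinner_eq_zero by blast
  qed
  then obtain x1 where "a.nrm x1 \<noteq> 0" by blast
  hence n0: "a.nrm x1 > 0" using a.nrm_nonneg[of x1] by simp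
  have "a.nrm (complex_of_real (1 / a.nrm x1) *\<^sub>C x1) = 1" unfolding a.nrm_scale using n0 by (simp add: norm_divide)
  thus ?thesis by blast
qed

end

context
  fixes A :: "'a::chilbert_space \<Rightarrow> 'a"
  assumes pA: "positive_op A"
begin

interpretation a: sesq "A_inner A" by (rule sesq_A[OF pA])

lemma main_ineq:
  assumes nz: "A \<noteq> (\<lambda>x. 0)" and TB: "T \<in> B_A A" and SB: "S \<in> B_A A"
  shows "A_numrad A (\<lambda>x. T x + S x) \<le>
    sqrt ((A_numrad A T)\<^sup>2 + (A_numrad A S)\<^sup>2
          + 1/2 * A_opnorm A (\<lambda>x. A_sharp A T (T x) + S (A_sharp A S x))
          + A_numrad A (S \<circ> T))"
proof -
  obtain CT where CT0: "CT \<ge> 0" and CT: "\<And>x. a.nrm (T x) \<le> CT * a.nrm x" using BA_bounded[OF pA TB] by blast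
  obtain CS where CS0: "CS \<ge> 0" and CS: "\<And>x. a.nrm (S x) \<le> CS * a.nrm x" using BA_bounded[OF pA SB] by blast
  have CTs: "\<And>x. a.nrm (A_sharp A T x) \<le> CT * a.nrm x" by (rule sharp_bounded[OF pA TB CT0 CT])
  have CSs: "\<And>x. a.nrm (A_sharp A S x) \<le> CS * a.nrm x" by (rule sharp_bounded[OF pA SB CS0 CS])
  define P where "P = (\<lambda>x. A_sharp A T (T x) + S (A_sharp A S x))"
  have CST: "a.nrm ((S \<circ> T) x) \<le> (CS * CT) * a.nrm x" for x
  proof -
    have "a.nrm ((S \<circ> T) x) \<le> CS * a.nrm (T x)" using CS by simp
    also have "\<dots> \<le> CS * (CT * a.nrm x)" by (rule mult_left_mono[OF CT CS0])
    finally show ?thesis by (simp add: algebra_simps)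
  qed
  have CP: "a.nrm (P x) \<le> (CT * CT + CS * CS) * a.nrm x" for x
  proof -
    have "a.nrm (P x) \<le> a.nrm (A_sharp A T (T x)) + a.nrm (S (A_sharp A S x))"
      unfolding P_def by (rule a.nrm_add)
    also have "a.nrm (A_sharp A T (T x)) \<le> CT * (CT * a.nrm x)"
      using CTs[of "T x"] mult_left_mono[OF CT CT0, of x] by linarith
    also have "a.nrm (S (A_sharp A S x)) \<le> CS * (CS * a.nrm x)"
      using CS[of "A_sharp A S x"] mult_left_mono[OF CSs CS0, of x] by linarith
    finally show ?thesis by (simp add: algebra_simps)
  qed
  define RHS where "RHS = (A_numrad A T)\<^sup>2 + (A_numrad A S)\<^sup>2 + 1/2 * A_opnorm A P + A_numrad A (S \<circ> T)"
  have key: "cmod (A_inner A (T x + S x) x) \<le> sqrt RHS" if x1: "a.nrm x = 1" for x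
  proof -
    define t where "t = A_inner A (T x) x"
    define s where "s = A_inner A (S x) x"
    have ts: "A_inner A (T x + S x) x = t + s" unfolding t_def s_def by (rule a.add_left)
    have ct: "cmod t \<le> A_numrad A T" unfolding t_def by (rule numrad_ge[OF pA CT x1])
    have cs: "cmod s \<le> A_numrad A S" unfolding s_def by (rule numrad_ge[OF pA CS x1])
    have s_eq: "s = A_inner A x (A_sharp A S x)" unfolding s_def by (rule sharp_adj[OF pA SB])
    have buz: "2 * cmod (A_inner A (T x) x * A_inner A x (A_sharp A S x))
        \<le> a.nrm (T x) * a.nrm (A_sharp A S x) + cmod (A_inner A (T x) (A_sharp A S x))"
      by (rule a.buzano[OF x1])
    have e: "A_inner A (T x) (A_sharp A S x) = A_inner A ((S \<circ> T) x) x"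
      unfolding comp_apply by (rule sharp_adj[OF pA SB, of "T x" x, symmetric])
    have cst: "cmod (A_inner A (T x) (A_sharp A S x)) \<le> A_numrad A (S \<circ> T)"
      unfolding e by (rule numrad_ge[OF pA CST x1])
    define u where "u = a.nrm (T x)"
    define v where "v = a.nrm (A_sharp A S x)"
    have amgm: "u * v \<le> (u\<^sup>2 + v\<^sup>2) / 2"
      using sum_squares_bound[of u v] by (simp add: power2_eq_square algebra_simps)
    have n1: "u\<^sup>2 = Re (A_inner A x (A_sharp A T (T x)))"
      unfolding u_def a.nrm_sq sharp_adj[OF pA TB] ..
    have "v\<^sup>2 = Re (A_inner A (S (A_sharp A S x)) x)"
      unfolding v_def a.nrm_sq sharp_adj[OF pA SB] ..
    also have "\<dots> = Re (A_inner A x (S (A_sharp A S x)))"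
      using a.herm[of "S (A_sharp A S x)" x] by simp
    finally have n2: "v\<^sup>2 = Re (A_inner A x (S (A_sharp A S x)))" .
    have "u\<^sup>2 + v\<^sup>2 = Re (A_inner A x (P x))" unfolding n1 n2 P_def a.add_right by simp
    also have "\<dots> \<le> a.nrm x * a.nrm (P x)" by (rule a.re_le)
    also have "\<dots> \<le> A_opnorm A P" using opnorm_ge[OF pA CP x1] x1 by simp
    finally have uv: "u\<^sup>2 + v\<^sup>2 \<le> A_opnorm A P" .
    have "2 * (cmod t * cmod s) \<le> 1/2 * A_opnorm A P + A_numrad A (S \<circ> T)"
    proof -
      have h: "u * v \<le> A_opnorm A P / 2" using amgm uv by (simp add: divide_right_mono order_trans)
      show ?thesis using buz cst h unfolding s_eq u_def[symmetric] v_def[symmetric] t_def[symmetric] norm_mult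
        by linarith
    qed
    moreover have "(cmod t)\<^sup>2 \<le> (A_numrad A T)\<^sup>2" by (rule power_mono[OF ct]) simp
    moreover have "(cmod s)\<^sup>2 \<le> (A_numrad A S)\<^sup>2" by (rule power_mono[OF cs]) simp
    moreover have "(cmod (t + s))\<^sup>2 \<le> (cmod t + cmod s)\<^sup>2"
      by (rule power_mono[OF norm_triangle_ineq]) simp
    ultimately have "(cmod (t + s))\<^sup>2 \<le> RHS" unfolding RHS_def by (simp add: power2_sum)
    thus ?thesis unfolding ts by (rule real_le_rsqrt)
  qed
  have "A_numrad A (\<lambda>x. T x + S x) \<le> sqrt RHS"
    unfolding A_numrad_def
  proof (rule cSup_least)
    obtain x where "a.nrm x = 1" using exists_unit[OF pA nz] by blast
    thus "{cmod (A_inner A (T x + S x) x) |x. A_seminorm A x = 1} \<noteq> {}"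
      using A_seminorm_nrm[OF pA] by auto
  next
    fix v assume "v \<in> {cmod (A_inner A (T x + S x) x) |x. A_seminorm A x = 1}"
    then obtain z where z: "a.nrm z = 1" "v = cmod (A_inner A (T z + S z) z)"
      using A_seminorm_nrm[OF pA] by auto
    show "v \<le> sqrt RHS" unfolding z(2) by (rule key[OF z(1)])
  qed
  thus ?thesis unfolding RHS_def P_def .
qed

end

theorem theorem3p6:
  fixes A T S :: "'a::chilbert_space \<Rightarrow> 'a"
  assumes "positive_op A" and "A \<noteq> (\<lambda>x. 0)"
    and "T \<in> B_A A" and "S \<in> B_A A"
  shows "A_numrad A (\<lambda>x. T x + S x) \<le>
    sqrt ((A_numrad A T)\<^sup>2 + (A_numrad A S)\<^sup>2
          + 1/2 * A_opnorm A (\<lambda>x. A_sharp A T (T x) + S (A_sharp A S x))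
          + A_numrad A (S \<circ> T))"
  by (rule main_ineq[OF assms])

end
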